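(* Let $\mathbb{E}$ be a finitely complete category, $\Sigma$ a fibrational class of split epimorphisms in $\mathbb{E}$, and suppose $\mathbb{E}$ is a $\Sigma$-Mal'tsev category. Then every $\Sigma$-relation $S$ on an object $X$ is transitive, and every symmetric $\Sigma$-relation on $X$ is an equivalence relation.
   Context: A split epimorphism is a pair $(f,s)$ with $f\colon X\to Y$, $s\colon Y\to X$, $fs=1_Y$ (the splitting is part of the data). A class $\Sigma$ of split epimorphisms is fibrational if it contains every split epimorphism $(f,s)$ with $f$ an isomorphism and is stable under pullback: if $(f,s)\colon X\rightleftarrows Y$ is in $\Sigma$ and $g\colon Y'\to Y$ is any morphism, the pulled-back split epimorphism $(f',s')\colon Y'\times_Y X\rightleftarrows Y'$, $s'=(1_{Y'},sg)$, is in $\Sigma$. A pair of morphisms with common codomain $Z$ is jointly extremally epic if it does not factor jointly through any monomorphism into $Z$ which is not an isomorphism. $\mathbb{E}$ is a $\Sigma$-Mal'tsev category if for every split epimorphism $(f,s)\colon X\rightleftarrows Y$ in $\Sigma$ and every split epimorphism $(g,t)$ with $g\colon Y'\to Y$, $gt=1_Y$, letting $X'=Y'\times_Y X$ be the pullback of $f$ along $g$, $s'=(1_{Y'},sg)\colon Y'\to X'$ and $\bar t=(tf,1_X)\colon X\to X'$, the pair $(s',\bar t)$ is jointly extremally epic. A $\Sigma$-relation on $X$ is a reflexive relation $(d_0,d_1)\colon S\rightarrowtail X\times X$ with reflexivity map $s_0\colon X\to S$ such that the split epimorphism $(d_0,s_0)$ belongs to $\Sigma$. *)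

theory Defs
  imports Main
begin

text \<open>Categories given by a set of objects, a set of arrows, domain, codomain,
identities and (partial) composition. ccomp C g f denotes g after f.\<close>

record ('o, 'a) category =
  Ob :: "'o set"
  Ar :: "'a set"
  cdom :: "'a \<Rightarrow> 'o"
  ccod :: "'a \<Rightarrow> 'o"
  cid :: "'o \<Rightarrow> 'a"
  ccomp :: "'a \<Rightarrow> 'a \<Rightarrow> 'a"

definition is_category :: "('o, 'a) category \<Rightarrow> bool" where
  "is_category C \<longleftrightarrow>
     (\<forall>f\<in>Ar C. cdom C f \<in> Ob C \<and> ccod C f \<in> Ob C) \<and>
     (\<forall>X\<in>Ob C. cid C X \<in> Ar C \<and> cdom C (cid C X) = X \<and> ccod C (cid C X) = X) \<and>
     (\<forall>f\<in>Ar C. \<forall>g\<in>Ar C. ccod C f = cdom C g \<longrightarrow>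
        ccomp C g f \<in> Ar C \<and> cdom C (ccomp C g f) = cdom C f \<and> ccod C (ccomp C g f) = ccod C g) \<and>
     (\<forall>f\<in>Ar C. ccomp C (cid C (ccod C f)) f = f \<and> ccomp C f (cid C (cdom C f)) = f) \<and>
     (\<forall>f\<in>Ar C. \<forall>g\<in>Ar C. \<forall>h\<in>Ar C. ccod C f = cdom C g \<and> ccod C g = cdom C h \<longrightarrow>
        ccomp C h (ccomp C g f) = ccomp C (ccomp C h g) f)"

definition hom :: "('o, 'a) category \<Rightarrow> 'a \<Rightarrow> 'o \<Rightarrow> 'o \<Rightarrow> bool" where
  "hom C f X Y \<longleftrightarrow> f \<in> Ar C \<and> cdom C f = X \<and> ccod C f = Y"

definition is_mono :: "('o, 'a) category \<Rightarrow> 'a \<Rightarrow> bool" where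
  "is_mono C m \<longleftrightarrow> m \<in> Ar C \<and>
     (\<forall>g h. g \<in> Ar C \<and> h \<in> Ar C \<and> ccod C g = cdom C m \<and> ccod C h = cdom C m \<and>
        cdom C g = cdom C h \<and> ccomp C m g = ccomp C m h \<longrightarrow> g = h)"

definition is_iso :: "('o, 'a) category \<Rightarrow> 'a \<Rightarrow> bool" where
  "is_iso C f \<longleftrightarrow> f \<in> Ar C \<and>
     (\<exists>g. hom C g (ccod C f) (cdom C f) \<and> ccomp C g f = cid C (cdom C f) \<and>
          ccomp C f g = cid C (ccod C f))"

definition is_terminal :: "('o, 'a) category \<Rightarrow> 'o \<Rightarrow> bool" where
  "is_terminal C T \<longleftrightarrow> T \<in> Ob C \<and> (\<forall>X\<in>Ob C. \<exists>!t. hom C t X T)"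

definition is_pullback :: "('o, 'a) category \<Rightarrow> 'a \<Rightarrow> 'a \<Rightarrow> 'o \<Rightarrow> 'a \<Rightarrow> 'a \<Rightarrow> bool" where
  "is_pullback C f g P p q \<longleftrightarrow>
     f \<in> Ar C \<and> g \<in> Ar C \<and> ccod C f = ccod C g \<and>
     hom C p P (cdom C f) \<and> hom C q P (cdom C g) \<and> ccomp C f p = ccomp C g q \<and>
     (\<forall>W a b. hom C a W (cdom C f) \<and> hom C b W (cdom C g) \<and> ccomp C f a = ccomp C g b \<longrightarrow>
        (\<exists>!u. hom C u W P \<and> ccomp C p u = a \<and> ccomp C q u = b))"

definition is_product :: "('o, 'a) category \<Rightarrow> 'o \<Rightarrow> 'o \<Rightarrow> 'o \<Rightarrow> 'a \<Rightarrow> 'a \<Rightarrow> bool" where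
  "is_product C X Y P p1 p2 \<longleftrightarrow>
     hom C p1 P X \<and> hom C p2 P Y \<and>
     (\<forall>W a b. hom C a W X \<and> hom C b W Y \<longrightarrow>
        (\<exists>!u. hom C u W P \<and> ccomp C p1 u = a \<and> ccomp C p2 u = b))"

definition finitely_complete :: "('o, 'a) category \<Rightarrow> bool" where
  "finitely_complete C \<longleftrightarrow> is_category C \<and> (\<exists>T. is_terminal C T) \<and>
     (\<forall>f g. f \<in> Ar C \<and> g \<in> Ar C \<and> ccod C f = ccod C g \<longrightarrow>
        (\<exists>P p q. is_pullback C f g P p q))"

definition split_epi :: "('o, 'a) category \<Rightarrow> 'a \<Rightarrow> 'a \<Rightarrow> bool" where
  "split_epi C f s \<longleftrightarrow> f \<in> Ar C \<and> hom C s (ccod C f) (cdom C f) \<and>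
     ccomp C f s = cid C (ccod C f)"

definition fibrational :: "('o, 'a) category \<Rightarrow> ('a \<times> 'a) set \<Rightarrow> bool" where
  "fibrational C \<Sigma> \<longleftrightarrow>
     (\<forall>(f, s) \<in> \<Sigma>. split_epi C f s) \<and>
     (\<forall>f s. split_epi C f s \<and> is_iso C f \<longrightarrow> (f, s) \<in> \<Sigma>) \<and>
     (\<forall>f s g X' g' f' s'. (f, s) \<in> \<Sigma> \<and> g \<in> Ar C \<and> ccod C g = ccod C f \<and>
        is_pullback C f g X' g' f' \<and> hom C s' (cdom C g) X' \<and>
        ccomp C f' s' = cid C (cdom C g) \<and> ccomp C g' s' = ccomp C s g \<longrightarrow> (f', s') \<in> \<Sigma>)"

definition jointly_extremally_epic :: "('o, 'a) category \<Rightarrow> 'a \<Rightarrow> 'a \<Rightarrow> bool" where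
  "jointly_extremally_epic C a b \<longleftrightarrow> a \<in> Ar C \<and> b \<in> Ar C \<and> ccod C a = ccod C b \<and>
     (\<forall>m a' b'. is_mono C m \<and> ccod C m = ccod C a \<and>
        hom C a' (cdom C a) (cdom C m) \<and> hom C b' (cdom C b) (cdom C m) \<and>
        ccomp C m a' = a \<and> ccomp C m b' = b \<longrightarrow> is_iso C m)"

text \<open>Sigma-Mal'tsev: for (f,s) in Sigma, split epi (g,t) with cod g = cod f,
pullback X' of f along g with projections g' : X' \<rightarrow> X, f' : X' \<rightarrow> Y',
s' = (1_{Y'}, s g), tbar = (t f, 1_X), the pair (s', tbar) is jointly extremally epic.\<close>
definition sigma_maltsev :: "('o, 'a) category \<Rightarrow> ('a \<times> 'a) set \<Rightarrow> bool" where
  "sigma_maltsev C \<Sigma> \<longleftrightarrow>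
     (\<forall>f s g t X' g' f' s' tbar. (f, s) \<in> \<Sigma> \<and> split_epi C g t \<and> ccod C g = ccod C f \<and>
        is_pullback C f g X' g' f' \<and>
        hom C s' (cdom C g) X' \<and> ccomp C f' s' = cid C (cdom C g) \<and> ccomp C g' s' = ccomp C s g \<and>
        hom C tbar (cdom C f) X' \<and> ccomp C f' tbar = ccomp C t f \<and> ccomp C g' tbar = cid C (cdom C f)
        \<longrightarrow> jointly_extremally_epic C s' tbar)"

definition is_relation :: "('o, 'a) category \<Rightarrow> 'o \<Rightarrow> 'o \<Rightarrow> 'a \<Rightarrow> 'a \<Rightarrow> bool" where
  "is_relation C X S d0 d1 \<longleftrightarrow> hom C d0 S X \<and> hom C d1 S X \<and>
     (\<exists>P p1 p2 m. is_product C X X P p1 p2 \<and> is_mono C m \<and> hom C m S P \<and>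
        ccomp C p1 m = d0 \<and> ccomp C p2 m = d1)"

definition reflexive_relation :: "('o, 'a) category \<Rightarrow> 'o \<Rightarrow> 'o \<Rightarrow> 'a \<Rightarrow> 'a \<Rightarrow> 'a \<Rightarrow> bool" where
  "reflexive_relation C X S d0 d1 s0 \<longleftrightarrow> is_relation C X S d0 d1 \<and> hom C s0 X S \<and>
     ccomp C d0 s0 = cid C X \<and> ccomp C d1 s0 = cid C X"

definition sigma_relation :: "('o, 'a) category \<Rightarrow> ('a \<times> 'a) set \<Rightarrow> 'o \<Rightarrow> 'o \<Rightarrow> 'a \<Rightarrow> 'a \<Rightarrow> 'a \<Rightarrow> bool" where
  "sigma_relation C \<Sigma> X S d0 d1 s0 \<longleftrightarrow> reflexive_relation C X S d0 d1 s0 \<and> (d0, s0) \<in> \<Sigma>"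

definition symmetric_relation :: "('o, 'a) category \<Rightarrow> 'o \<Rightarrow> 'o \<Rightarrow> 'a \<Rightarrow> 'a \<Rightarrow> bool" where
  "symmetric_relation C X S d0 d1 \<longleftrightarrow> is_relation C X S d0 d1 \<and>
     (\<exists>\<sigma>. hom C \<sigma> S S \<and> ccomp C d0 \<sigma> = d1 \<and> ccomp C d1 \<sigma> = d0)"

text \<open>Transitive: for the pullback T of d1 and d0 (pairs xSy, ySz), the map
(d0 q0, d1 q1) : T \<rightarrow> X \<times> X factors through S.\<close>
definition transitive_relation :: "('o, 'a) category \<Rightarrow> 'o \<Rightarrow> 'o \<Rightarrow> 'a \<Rightarrow> 'a \<Rightarrow> bool" where
  "transitive_relation C X S d0 d1 \<longleftrightarrow> is_relation C X S d0 d1 \<and>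
     (\<forall>T q0 q1. is_pullback C d1 d0 T q0 q1 \<longrightarrow>
        (\<exists>t. hom C t T S \<and> ccomp C d0 t = ccomp C d0 q0 \<and> ccomp C d1 t = ccomp C d1 q1))"

definition equivalence_relation :: "('o, 'a) category \<Rightarrow> 'o \<Rightarrow> 'o \<Rightarrow> 'a \<Rightarrow> 'a \<Rightarrow> bool" where
  "equivalence_relation C X S d0 d1 \<longleftrightarrow>
     (\<exists>s0. reflexive_relation C X S d0 d1 s0) \<and> symmetric_relation C X S d0 d1 \<and>
     transitive_relation C X S d0 d1"

end

theory Submission
  imports Defs
begin

lemma hom_obs: "is_category C \<Longrightarrow> hom C f X Y \<Longrightarrow> X \<in> Ob C \<and> Y \<in> Ob C"
  unfolding is_category_def hom_def by blast

lemma comp_hom: "is_category C \<Longrightarrow> hom C f X Y \<Longrightarrow> hom C g Y Z \<Longrightarrow> hom C (ccomp C g f) X Z"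
  unfolding is_category_def hom_def by metis

lemma cassoc: "is_category C \<Longrightarrow> hom C f X Y \<Longrightarrow> hom C g Y Z \<Longrightarrow> hom C h Z W \<Longrightarrow>
   ccomp C h (ccomp C g f) = ccomp C (ccomp C h g) f"
  unfolding is_category_def hom_def by metis

lemma idl: "is_category C \<Longrightarrow> hom C f X Y \<Longrightarrow> ccomp C (cid C Y) f = f"
  unfolding is_category_def hom_def by metis

lemma idr: "is_category C \<Longrightarrow> hom C f X Y \<Longrightarrow> ccomp C f (cid C X) = f"
  unfolding is_category_def hom_def by metis

lemma id_hom: "is_category C \<Longrightarrow> X \<in> Ob C \<Longrightarrow> hom C (cid C X) X X"
  unfolding is_category_def hom_def by metis

lemma pb_sym: "is_pullback C f g P p q \<Longrightarrow> is_pullback C g f P q p"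
  unfolding is_pullback_def by metis

lemma pb_ex: "is_pullback C f g P p q \<Longrightarrow> hom C a W (cdom C f) \<Longrightarrow> hom C b W (cdom C g) \<Longrightarrow>
  ccomp C f a = ccomp C g b \<Longrightarrow> \<exists>u. hom C u W P \<and> ccomp C p u = a \<and> ccomp C q u = b"
  unfolding is_pullback_def by blast

lemma pb_un: "is_pullback C f g P p q \<Longrightarrow> hom C a W (cdom C f) \<Longrightarrow> hom C b W (cdom C g) \<Longrightarrow>
  ccomp C f a = ccomp C g b \<Longrightarrow> hom C u W P \<Longrightarrow> ccomp C p u = a \<Longrightarrow> ccomp C q u = b \<Longrightarrow>
  hom C u' W P \<Longrightarrow> ccomp C p u' = a \<Longrightarrow> ccomp C q u' = b \<Longrightarrow> u = u'"
  unfolding is_pullback_def by blast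

lemma pr_ex: "is_product C X Y P p1 p2 \<Longrightarrow> hom C a W X \<Longrightarrow> hom C b W Y \<Longrightarrow>
  \<exists>u. hom C u W P \<and> ccomp C p1 u = a \<and> ccomp C p2 u = b"
  unfolding is_product_def by blast

lemma pr_un: "is_product C X Y P p1 p2 \<Longrightarrow> hom C a W X \<Longrightarrow> hom C b W Y \<Longrightarrow>
  hom C u W P \<Longrightarrow> ccomp C p1 u = a \<Longrightarrow> ccomp C p2 u = b \<Longrightarrow>
  hom C u' W P \<Longrightarrow> ccomp C p1 u' = a \<Longrightarrow> ccomp C p2 u' = b \<Longrightarrow> u = u'"
  unfolding is_product_def by blast

lemma trans_main:
  assumes fc: "finitely_complete C" and mal: "sigma_maltsev C \<Sigma>"
    and sr: "sigma_relation C \<Sigma> X S d0 d1 s0"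
  shows "transitive_relation C X S d0 d1"
proof -
  have cat: "is_category C" using fc unfolding finitely_complete_def by blast
  have refl: "reflexive_relation C X S d0 d1 s0" and inS: "(d0, s0) \<in> \<Sigma>"
    using sr unfolding sigma_relation_def by auto
  have rel: "is_relation C X S d0 d1" and s0h: "hom C s0 X S"
    and d0s0: "ccomp C d0 s0 = cid C X" and d1s0: "ccomp C d1 s0 = cid C X"
    using refl unfolding reflexive_relation_def by auto
  have d0h: "hom C d0 S X" and d1h: "hom C d1 S X" using rel unfolding is_relation_def by auto
  obtain P p1 p2 mS where prod: "is_product C X X P p1 p2" and monoS: "is_mono C mS"
    and mSh: "hom C mS S P" and p1m: "ccomp C p1 mS = d0" and p2m: "ccomp C p2 mS = d1"
    using rel unfolding is_relation_def by blast
  have p1h: "hom C p1 P X" and p2h: "hom C p2 P X" using prod unfolding is_product_def by auto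
  have XOb: "X \<in> Ob C" and SOb: "S \<in> Ob C" using hom_obs[OF cat d0h] by auto
  have idS: "hom C (cid C S) S S" using id_hom[OF cat SOb] .
  show ?thesis
    unfolding transitive_relation_def
  proof (intro conjI rel allI impI)
    fix T q0 q1
    assume pb: "is_pullback C d1 d0 T q0 q1"
    have q0h: "hom C q0 T S" and q1h: "hom C q1 T S" and sq: "ccomp C d1 q0 = ccomp C d0 q1"
      using pb d0h d1h unfolding is_pullback_def hom_def by auto
    have pb': "is_pullback C d0 d1 T q1 q0" using pb_sym[OF pb] .
    have TOb: "T \<in> Ob C" using hom_obs[OF cat q0h] by auto
    have idT: "hom C (cid C T) T T" using id_hom[OF cat TOb] .
    have sd1: "hom C (ccomp C s0 d1) S S" using comp_hom[OF cat d1h s0h] .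
    have sd0: "hom C (ccomp C s0 d0) S S" using comp_hom[OF cat d0h s0h] .
    have e1: "ccomp C d0 (ccomp C s0 d1) = d1"
      using cassoc[OF cat d1h s0h d0h] d0s0 idl[OF cat d1h] by simp
    have e2: "ccomp C d1 (ccomp C s0 d0) = d0"
      using cassoc[OF cat d0h s0h d1h] d1s0 idl[OF cat d0h] by simp
    have "ccomp C d1 (cid C S) = ccomp C d0 (ccomp C s0 d1)"
      using e1 idr[OF cat d1h] by simp
    then obtain u where uh: "hom C u S T" and q0u: "ccomp C q0 u = cid C S"
      and q1u: "ccomp C q1 u = ccomp C s0 d1"
      using pb_ex[OF pb, of "cid C S" S "ccomp C s0 d1"] idS sd1 d1h d0h unfolding hom_def by auto
    have "ccomp C d1 (ccomp C s0 d0) = ccomp C d0 (cid C S)"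
      using e2 idr[OF cat d0h] by simp
    then obtain v where vh: "hom C v S T" and q0v: "ccomp C q0 v = ccomp C s0 d0"
      and q1v: "ccomp C q1 v = cid C S"
      using pb_ex[OF pb, of "ccomp C s0 d0" S "cid C S"] idS sd0 d1h d0h unfolding hom_def by auto
    have se: "split_epi C d1 s0" using d1h s0h d1s0 unfolding split_epi_def hom_def by auto
    have jee: "jointly_extremally_epic C u v"
      apply (rule mal[unfolded sigma_maltsev_def, rule_format, of d0 s0 d1 s0 T q1 q0 u v])
      using inS se pb' uh vh q0u q1u q0v q1v d0h d1h unfolding hom_def by auto
    have a0: "hom C (ccomp C d0 q0) T X" using comp_hom[OF cat q0h d0h] .
    have a1: "hom C (ccomp C d1 q1) T X" using comp_hom[OF cat q1h d1h] .
    obtain h where hh: "hom C h T P" and p1hh: "ccomp C p1 h = ccomp C d0 q0"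
      and p2hh: "ccomp C p2 h = ccomp C d1 q1"
      using pr_ex[OF prod a0 a1] by blast
    have produniq: "\<And>k1 k2. hom C k1 S P \<Longrightarrow> hom C k2 S P \<Longrightarrow> ccomp C p1 k1 = d0 \<Longrightarrow>
        ccomp C p2 k1 = d1 \<Longrightarrow> ccomp C p1 k2 = d0 \<Longrightarrow> ccomp C p2 k2 = d1 \<Longrightarrow> k1 = k2"
      using pr_un[OF prod d0h d1h] by blast
    have hu: "hom C (ccomp C h u) S P" using comp_hom[OF cat uh hh] .
    have hv: "hom C (ccomp C h v) S P" using comp_hom[OF cat vh hh] .
    have "ccomp C p1 (ccomp C h u) = d0"
      using cassoc[OF cat uh hh p1h] p1hh cassoc[OF cat uh q0h d0h] q0u idr[OF cat d0h] by simp
    moreover have "ccomp C p2 (ccomp C h u) = d1"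
      using cassoc[OF cat uh hh p2h] p2hh cassoc[OF cat uh q1h d1h] q1u e1
        cassoc[OF cat d1h s0h d1h] d1s0 idl[OF cat d1h] by simp
    ultimately have hum: "ccomp C h u = mS" using produniq[OF hu mSh] p1m p2m by blast
    have "ccomp C p1 (ccomp C h v) = d0"
      using cassoc[OF cat vh hh p1h] p1hh cassoc[OF cat vh q0h d0h] q0v
        cassoc[OF cat d0h s0h d0h] d0s0 idl[OF cat d0h] by simp
    moreover have "ccomp C p2 (ccomp C h v) = d1"
      using cassoc[OF cat vh hh p2h] p2hh cassoc[OF cat vh q1h d1h] q1v idr[OF cat d1h] by simp
    ultimately have hvm: "ccomp C h v = mS" using produniq[OF hv mSh] p1m p2m by blast
    obtain R r0 r1 where pbR: "is_pullback C mS h R r0 r1"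
    proof -
      have "\<exists>R r0 r1. is_pullback C mS h R r0 r1"
        using fc mSh hh unfolding finitely_complete_def hom_def by simp
      then show ?thesis using that by blast
    qed
    have r0h: "hom C r0 R S" and r1h: "hom C r1 R T" and sqR: "ccomp C mS r0 = ccomp C h r1"
      using pbR mSh hh unfolding is_pullback_def hom_def by auto
    have mono1: "is_mono C r1"
      unfolding is_mono_def
    proof (intro conjI allI impI)
      show "r1 \<in> Ar C" using r1h unfolding hom_def by auto
      fix g k
      assume H: "g \<in> Ar C \<and> k \<in> Ar C \<and> ccod C g = cdom C r1 \<and> ccod C k = cdom C r1 \<and>
        cdom C g = cdom C k \<and> ccomp C r1 g = ccomp C r1 k"
      define W where "W = cdom C g"
      have gh: "hom C g W R" and kh: "hom C k W R" using H r1h unfolding W_def hom_def by auto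
      have eqm: "ccomp C mS (ccomp C r0 g) = ccomp C mS (ccomp C r0 k)"
        using cassoc[OF cat gh r0h mSh] cassoc[OF cat kh r0h mSh] sqR
          cassoc[OF cat gh r1h hh] cassoc[OF cat kh r1h hh] H by simp
      have r0gk: "ccomp C r0 g = ccomp C r0 k"
        apply (rule monoS[unfolded is_mono_def, THEN conjunct2, rule_format])
        using eqm comp_hom[OF cat gh r0h] comp_hom[OF cat kh r0h] mSh
        unfolding hom_def by auto
      have A: "hom C (ccomp C r0 g) W S" using comp_hom[OF cat gh r0h] .
      have B: "hom C (ccomp C r1 g) W T" using comp_hom[OF cat gh r1h] .
      have sqW: "ccomp C mS (ccomp C r0 g) = ccomp C h (ccomp C r1 g)"
        using cassoc[OF cat gh r0h mSh] cassoc[OF cat gh r1h hh] sqR by simp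
        have AA: "hom C (ccomp C r0 g) W (cdom C mS)" and BB: "hom C (ccomp C r1 g) W (cdom C h)"
        using A B mSh hh unfolding hom_def by auto
      have H1: "ccomp C r1 k = ccomp C r1 g" using H by simp
      show "g = k" using pb_un[OF pbR AA BB sqW gh HOL.refl HOL.refl kh r0gk[symmetric] H1] .
    qed
    have "ccomp C mS (cid C S) = ccomp C h u" using hum idr[OF cat mSh] by simp
    then obtain a' where a'h: "hom C a' S R" and r1a: "ccomp C r1 a' = u"
      using pb_ex[OF pbR, of "cid C S" S u] idS uh mSh hh unfolding hom_def by auto
    have "ccomp C mS (cid C S) = ccomp C h v" using hvm idr[OF cat mSh] by simp
    then obtain b' where b'h: "hom C b' S R" and r1b: "ccomp C r1 b' = v"
      using pb_ex[OF pbR, of "cid C S" S v] idS vh mSh hh unfolding hom_def by auto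
    have "is_iso C r1"
      apply (rule jee[unfolded jointly_extremally_epic_def, THEN conjunct2, THEN conjunct2,
          THEN conjunct2, rule_format, of r1 a' b'])
      using mono1 a'h b'h r1a r1b uh vh r1h
      unfolding hom_def by auto
    then obtain k where kh: "hom C k T R" and r1k: "ccomp C r1 k = cid C T"
      using r1h unfolding is_iso_def hom_def by auto
    define t where "t = ccomp C r0 k"
    have th: "hom C t T S" using comp_hom[OF cat kh r0h] t_def by simp
    have hk: "ccomp C h (ccomp C r1 k) = h" using r1k idr[OF cat hh] by simp
    have rk: "hom C (ccomp C r0 k) T S" using comp_hom[OF cat kh r0h] .
    have mrk: "ccomp C mS (ccomp C r0 k) = h"
    proof -
      have "ccomp C mS (ccomp C r0 k) = ccomp C (ccomp C mS r0) k" using cassoc[OF cat kh r0h mSh] .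
      also have "\<dots> = ccomp C (ccomp C h r1) k" using sqR by simp
      also have "\<dots> = ccomp C h (ccomp C r1 k)" using cassoc[OF cat kh r1h hh] by simp
      finally show ?thesis using hk by simp
    qed
    have "ccomp C d0 t = ccomp C (ccomp C p1 mS) (ccomp C r0 k)" using t_def p1m by simp
    also have "\<dots> = ccomp C p1 (ccomp C mS (ccomp C r0 k))" using cassoc[OF cat rk mSh p1h] by simp
    finally have t0: "ccomp C d0 t = ccomp C d0 q0" using mrk p1hh by simp
    have "ccomp C d1 t = ccomp C (ccomp C p2 mS) (ccomp C r0 k)" using t_def p2m by simp
    also have "\<dots> = ccomp C p2 (ccomp C mS (ccomp C r0 k))" using cassoc[OF cat rk mSh p2h] by simp
    finally have t1: "ccomp C d1 t = ccomp C d1 q1" using mrk p2hh by simp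
    show "\<exists>t. hom C t T S \<and> ccomp C d0 t = ccomp C d0 q0 \<and> ccomp C d1 t = ccomp C d1 q1"
      using th t0 t1 by blast
  qed
qed

theorem proposition2p2:
  fixes C :: "('o, 'a) category" and \<Sigma> :: "('a \<times> 'a) set"
  assumes "finitely_complete C" and "fibrational C \<Sigma>" and "sigma_maltsev C \<Sigma>"
  shows "(\<forall>X S d0 d1 s0. sigma_relation C \<Sigma> X S d0 d1 s0 \<longrightarrow> transitive_relation C X S d0 d1) \<and>
         (\<forall>X S d0 d1 s0. sigma_relation C \<Sigma> X S d0 d1 s0 \<and> symmetric_relation C X S d0 d1 \<longrightarrow>
            equivalence_relation C X S d0 d1)"
  using trans_main[OF assms(1) assms(3)]
  unfolding equivalence_relation_def sigma_relation_def by blast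

end
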